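(* Let $(u_S,u_R)$ be an environment satisfying scant-indifferences. If a profile $(\sigma,\rho)$ is R-BR and $U_S(\sigma,\rho)$ equals the persuasion payoff, then $\rho$ is pure-on-path, i.e., $\rho(\cdot|m)$ is degenerate for every $m\in M_\sigma$.
   Context: $A=\{a_1,\dots,a_{|A|}\}$ and $\Omega$ are finite nonempty sets, $\mu_0$ a prior on $\Omega$ with $\mu_0(\omega)>0$ for all $\omega$, and $M$ a finite message set with $|M|>\max\{|\Omega|,|A|\}$. An environment is a pair of functions $u_S,u_R:A\times\Omega\to[0,1]$. A messaging strategy is $\sigma:\Omega\to\Delta M$; an action strategy is $\rho:M\to\Delta A$. $U_i(\sigma,\rho)=\sum_{\omega,m,a}\mu_0(\omega)\sigma(m|\omega)\rho(a|m)u_i(a,\omega)$. $(\sigma,\rho)$ is R-BR if $\rho\in\arg\max_{\rho'}U_R(\sigma,\rho')$. The persuasion payoff is the maximum of $U_S$ over R-BR profiles. $M_\sigma=\{m:\sigma(m|\omega)>0\text{ for some }\omega\}$. Scant-indifferences: with $\mathbf u_S(a)=u_S(a,\cdot)\in\mathbb R^{|\Omega|}$, $\mathbf u_R(a)=u_R(a,\cdot)$, for each $i$ the expanded-indifference matrix $T^i$ has $|\Omega|$ columns and rows $\mathbf u_S(a_j)-\mathbf u_S(a_i)$ ($j\ne i$), $\mathbf u_R(a_j)-\mathbf u_R(a_i)$ ($j\ne i$), and the rows of the $|\Omega|\times|\Omega|$ identity; the environment satisfies scant-indifferences if for each $i$ every matrix obtained from $T^i$ by deleting some rows has full rank. *)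

theory Defs
  imports "HOL-Analysis.Analysis" "HOL-Probability.Probability_Mass_Function"
begin

definition U :: "'w::finite pmf \<Rightarrow> ('a::finite \<Rightarrow> 'w \<Rightarrow> real) \<Rightarrow> ('w \<Rightarrow> 'm::finite pmf)
                  \<Rightarrow> ('m \<Rightarrow> 'a pmf) \<Rightarrow> real" where
  "U mu0 u \<sigma> \<rho> = (\<Sum>\<omega>\<in>UNIV. \<Sum>m\<in>UNIV. \<Sum>a\<in>UNIV.
       pmf mu0 \<omega> * pmf (\<sigma> \<omega>) m * pmf (\<rho> m) a * u a \<omega>)"

definition R_BR :: "'w::finite pmf \<Rightarrow> ('a::finite \<Rightarrow> 'w \<Rightarrow> real) \<Rightarrow> ('w \<Rightarrow> 'm::finite pmf)
                  \<Rightarrow> ('m \<Rightarrow> 'a pmf) \<Rightarrow> bool" where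
  "R_BR mu0 uR \<sigma> \<rho> \<longleftrightarrow> (\<forall>\<rho>'. U mu0 uR \<sigma> \<rho>' \<le> U mu0 uR \<sigma> \<rho>)"

definition persuasion_payoff :: "'w::finite pmf \<Rightarrow> ('a::finite \<Rightarrow> 'w \<Rightarrow> real)
     \<Rightarrow> ('a \<Rightarrow> 'w \<Rightarrow> real) \<Rightarrow> 'm::finite itself \<Rightarrow> real" where
  "persuasion_payoff mu0 uS uR (_ :: 'm itself) =
     Sup {U mu0 uS \<sigma> \<rho> | (\<sigma> :: 'w \<Rightarrow> 'm pmf) \<rho>. R_BR mu0 uR \<sigma> \<rho>}"

definition M_sigma :: "('w \<Rightarrow> 'm pmf) \<Rightarrow> 'm set" where
  "M_sigma \<sigma> = {m. \<exists>\<omega>. pmf (\<sigma> \<omega>) m > 0}"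

text \<open>Rows of the expanded-indifference matrix T^i, indexed by
  Inl (j, True): u_S(a_j) - u_S(a_i); Inl (j, False): u_R(a_j) - u_R(a_i) (j ~= i);
  Inr v: the v-th row of the identity.\<close>
definition indiff_row :: "('a \<Rightarrow> 'w::finite \<Rightarrow> real) \<Rightarrow> ('a \<Rightarrow> 'w \<Rightarrow> real) \<Rightarrow> 'a
     \<Rightarrow> ('a \<times> bool) + 'w \<Rightarrow> real^'w" where
  "indiff_row uS uR i k = (case k of
      Inl (j, True) \<Rightarrow> (\<chi> w. uS j w - uS i w)
    | Inl (j, False) \<Rightarrow> (\<chi> w. uR j w - uR i w)
    | Inr v \<Rightarrow> (\<chi> w. if w = v then 1 else 0))"

definition indiff_index :: "'a \<Rightarrow> (('a \<times> bool) + 'w) set" where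
  "indiff_index i = {Inl (j, b) | j b. j \<noteq> i} \<union> range Inr"

text \<open>Scant-indifferences: every row-submatrix of every T^i has full rank,
  i.e. its row rank equals min(number of rows, number of columns).\<close>
definition scant_indifferences :: "('a::finite \<Rightarrow> 'w::finite \<Rightarrow> real) \<Rightarrow> ('a \<Rightarrow> 'w \<Rightarrow> real) \<Rightarrow> bool" where
  "scant_indifferences uS uR \<longleftrightarrow>
     (\<forall>i. \<forall>J \<subseteq> indiff_index i.
        dim (span (indiff_row uS uR i ` J)) = min (card J) CARD('w))"

end

theory Submission
  imports Defs
begin

definition Vf :: "('a \<Rightarrow> 'w::finite \<Rightarrow> real) \<Rightarrow> ('w \<Rightarrow> real) \<Rightarrow> 'a \<Rightarrow> real" where
  "Vf u p a = (\<Sum>\<omega>\<in>UNIV. p \<omega> * u a \<omega>)"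

lemma find_d:
  fixes uS uR :: "'a::finite \<Rightarrow> 'w::finite \<Rightarrow> real" and p :: "'w \<Rightarrow> real"
  assumes scant: "scant_indifferences uS uR"
    and pnz: "\<exists>\<omega>. p \<omega> \<noteq> 0"
    and ij: "i \<noteq> j"
    and iK: "\<forall>b. Vf uR p b \<le> Vf uR p i"
    and jK: "\<forall>b. Vf uR p b \<le> Vf uR p j"
  shows "\<exists>d. (\<forall>\<omega>. p \<omega> = 0 \<longrightarrow> d \<omega> = 0) \<and>
     (\<forall>k. (\<forall>b. Vf uR p b \<le> Vf uR p k) \<longrightarrow> Vf uR d k = Vf uR d i) \<and> Vf uS d j \<noteq> Vf uS d i"
proof -
  define K where "K = {k. \<forall>b. Vf uR p b \<le> Vf uR p k}"
  define J0 where "J0 = (\<lambda>k. Inl (k, False)) ` (K - {i}) \<union> Inr ` {\<omega>. p \<omega> = 0}"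
  define row where "row = indiff_row uS uR i"
  define S where "S = row ` J0"
  define pv :: "real^'w" where "pv = (\<chi> \<omega>. p \<omega>)"
  have Kv: "k \<in> K \<Longrightarrow> Vf uR p k = Vf uR p i" for k
    using iK unfolding K_def by (simp add: order_antisym)
  have orth: "s \<in> S \<Longrightarrow> orthogonal pv s" for s
  proof -
    assume "s \<in> S"
    then obtain t where t: "t \<in> J0" "s = row t" unfolding S_def by auto
    show ?thesis
    proof (cases t)
      case (Inl kb)
      then obtain k where k: "t = Inl (k, False)" "k \<in> K" using t unfolding J0_def by auto
      have "pv \<bullet> s = (\<Sum>w\<in>UNIV. p w * (uR k w - uR i w))"
        using t k by (simp add: row_def indiff_row_def pv_def inner_vec_def)
      also have "\<dots> = Vf uR p k - Vf uR p i"
        by (simp add: Vf_def algebra_simps sum_subtractf)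
      finally show ?thesis using Kv[OF k(2)] by (simp add: orthogonal_def)
    next
      case (Inr v)
      then have pv0: "p v = 0" using t unfolding J0_def by auto
      have "pv \<bullet> s = (\<Sum>w\<in>UNIV. p w * (if w = v then 1 else 0))"
        using t Inr by (simp add: row_def indiff_row_def pv_def inner_vec_def)
      also have "\<dots> = p v" by (simp add: if_distrib cong: if_cong)
      finally show ?thesis using pv0 by (simp add: orthogonal_def)
    qed
  qed
  have pv0: "pv \<noteq> 0" using pnz by (auto simp: pv_def vec_eq_iff)
  have spanS: "span S \<noteq> UNIV"
  proof
    assume "span S = UNIV"
    then have "pv \<in> span S" by auto
    then have "orthogonal pv pv" using orthogonal_to_span orth by blast
    then show False using pv0 by (simp add: orthogonal_def)
  qed
  have "dim S \<noteq> CARD('w)"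
    using dim_eq_full[of S] spanS by simp
  moreover have "dim S \<le> CARD('w)"
    using dim_subset_UNIV[of S] by simp
  ultimately have dimS: "dim S < CARD('w)" by simp
  have J0sub: "J0 \<subseteq> indiff_index i" unfolding J0_def indiff_index_def by auto
  have "dim (span S) = min (card J0) CARD('w)"
    using scant J0sub unfolding scant_indifferences_def S_def row_def by blast
  then have cJ0: "card J0 < CARD('w)" "dim S = card J0" using dimS by (auto simp: dim_span)
  define J where "J = insert (Inl (j, True)) J0"
  have Jsub: "J \<subseteq> indiff_index i" unfolding J_def using J0sub ij by (auto simp: indiff_index_def)
  have notin: "Inl (j, True) \<notin> J0" unfolding J0_def by auto
  have cJ: "card J = card J0 + 1" unfolding J_def using notin by simp
  have "dim (span (row ` J)) = min (card J) CARD('w)"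
    using scant Jsub unfolding scant_indifferences_def row_def by blast
  then have dimJ: "dim (row ` J) = card J0 + 1" using cJ cJ0 by (simp add: dim_span)
  define sj where "sj = row (Inl (j, True))"
  have sjn: "sj \<notin> span S"
  proof
    assume "sj \<in> span S"
    then have "span (insert sj S) = span S" by (rule span_redundant)
    moreover have "row ` J = insert sj S" unfolding J_def sj_def S_def by simp
    ultimately have "dim (row ` J) = dim S" by (metis dim_span)
    then show False using dimJ cJ0 by simp
  qed
  obtain y z where yz: "y \<in> span S" "\<And>w. w \<in> span S \<Longrightarrow> orthogonal z w" "sj = y + z"
    using orthogonal_subspace_decomp_exists by blast
  have z0: "z \<noteq> 0" using yz sjn by auto
  have "sj \<bullet> z = y \<bullet> z + z \<bullet> z" using yz(3) by (simp add: inner_add_left)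
  moreover have "y \<bullet> z = 0" using yz(2)[OF yz(1)] by (simp add: orthogonal_def inner_commute)
  ultimately have sjz: "sj \<bullet> z \<noteq> 0" using z0 by simp
  define d where "d = (\<lambda>w. z $ w)"
  have zS: "s \<in> S \<Longrightarrow> z \<bullet> s = 0" for s using yz(2) span_base by (auto simp: orthogonal_def)
  show ?thesis
  proof (intro exI conjI allI impI)
    fix \<omega> assume "p \<omega> = 0"
    then have "row (Inr \<omega>) \<in> S" unfolding S_def J0_def by auto
    then have "z \<bullet> row (Inr \<omega>) = 0" by (rule zS)
    moreover have "z \<bullet> row (Inr \<omega>) = (\<Sum>w\<in>UNIV. z $ w * (if w = \<omega> then 1 else 0))"
      by (simp add: row_def indiff_row_def inner_vec_def)
    moreover have "\<dots> = z $ \<omega>" by (simp add: if_distrib cong: if_cong)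
    ultimately show "d \<omega> = 0" by (simp add: d_def)
  next
    fix k assume kK: "\<forall>b. Vf uR p b \<le> Vf uR p k"
    show "Vf uR d k = Vf uR d i"
    proof (cases "k = i")
      case False
      then have "row (Inl (k, False)) \<in> S" using kK unfolding S_def J0_def K_def by auto
      then have "z \<bullet> row (Inl (k, False)) = 0" by (rule zS)
      moreover have "z \<bullet> row (Inl (k, False)) = (\<Sum>w\<in>UNIV. z $ w * (uR k w - uR i w))"
        by (simp add: row_def indiff_row_def inner_vec_def)
      moreover have "\<dots> = Vf uR d k - Vf uR d i"
        by (simp add: Vf_def d_def algebra_simps sum_subtractf)
      ultimately show ?thesis by simp
    qed simp
  next
    have "sj \<bullet> z = (\<Sum>w\<in>UNIV. (uS j w - uS i w) * z $ w)"
      by (simp add: sj_def row_def indiff_row_def inner_vec_def)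
    also have "\<dots> = Vf uS d j - Vf uS d i"
      by (simp add: Vf_def d_def algebra_simps sum_subtractf)
    finally show "Vf uS d j \<noteq> Vf uS d i" using sjz by simp
  qed
qed


definition Pm :: "'w pmf \<Rightarrow> ('w \<Rightarrow> 'm pmf) \<Rightarrow> 'm \<Rightarrow> 'w \<Rightarrow> real" where
  "Pm mu0 \<sigma> m \<omega> = pmf mu0 \<omega> * pmf (\<sigma> \<omega>) m"

lemma U_alt:
  fixes mu0 :: "'w::finite pmf" and \<sigma> :: "'w \<Rightarrow> 'm::finite pmf" and \<rho> :: "'m \<Rightarrow> 'a::finite pmf"
  shows "U mu0 u \<sigma> \<rho> = (\<Sum>m\<in>UNIV. \<Sum>a\<in>UNIV. pmf (\<rho> m) a * Vf u (Pm mu0 \<sigma> m) a)"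
proof -
  have "U mu0 u \<sigma> \<rho> = (\<Sum>m\<in>UNIV. \<Sum>\<omega>\<in>UNIV. \<Sum>a\<in>UNIV. pmf mu0 \<omega> * pmf (\<sigma> \<omega>) m * pmf (\<rho> m) a * u a \<omega>)"
    unfolding U_def by (rule sum.swap)
  also have "\<dots> = (\<Sum>m\<in>UNIV. \<Sum>a\<in>UNIV. \<Sum>\<omega>\<in>UNIV. pmf mu0 \<omega> * pmf (\<sigma> \<omega>) m * pmf (\<rho> m) a * u a \<omega>)"
    by (rule sum.cong[OF refl], rule sum.swap)
  also have "\<dots> = (\<Sum>m\<in>UNIV. \<Sum>a\<in>UNIV. pmf (\<rho> m) a * Vf u (Pm mu0 \<sigma> m) a)"
    by (simp add: Vf_def Pm_def sum_distrib_left mult_ac)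
  finally show ?thesis .
qed

lemma sum_bind:
  fixes p :: "'x::finite pmf" and K :: "'x \<Rightarrow> 'y::finite pmf"
  shows "(\<Sum>z\<in>UNIV. pmf (bind_pmf p K) z * h z) = (\<Sum>x\<in>UNIV. pmf p x * (\<Sum>z\<in>UNIV. pmf (K x) z * h z))"
proof -
  have "(\<Sum>z\<in>UNIV. pmf (bind_pmf p K) z * h z) = (\<Sum>z\<in>UNIV. (\<Sum>x\<in>UNIV. pmf p x * pmf (K x) z) * h z)"
    by (subst pmf_bind, subst integral_measure_pmf[where A=UNIV]) auto
  also have "\<dots> = (\<Sum>x\<in>UNIV. pmf p x * (\<Sum>z\<in>UNIV. pmf (K x) z * h z))"
    unfolding sum_distrib_right sum_distrib_left
    by (subst sum.swap) (simp add: mult_ac)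
  finally show ?thesis .
qed

lemma avg_le:
  fixes r :: "'a::finite pmf"
  assumes "\<forall>a\<in>set_pmf r. (w a :: real) \<le> w c"
  shows "(\<Sum>a\<in>UNIV. pmf r a * w a) \<le> w c"
proof -
  have "(\<Sum>a\<in>UNIV. pmf r a * w a) \<le> (\<Sum>a\<in>UNIV. pmf r a * w c)"
    apply (rule sum_mono)
    using assms by (metis mult_left_mono mult_not_zero order_refl pmf_nonneg set_pmf_iff)
  also have "\<dots> = w c" by (simp add: sum_distrib_right[symmetric] sum_pmf_eq_1)
  finally show ?thesis .
qed

lemma fin_argmax:
  fixes g :: "'x \<Rightarrow> real"
  assumes "finite S" "S \<noteq> {}"
  shows "\<exists>c\<in>S. \<forall>a\<in>S. g a \<le> g c"
proof -
  have "Max (g ` S) \<in> g ` S" using assms by simp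
  then obtain c where "c \<in> S" "g c = Max (g ` S)" by auto
  then show ?thesis using assms by (metis Max_ge finite_imageI image_eqI)
qed

lemma RBR_supp:
  fixes mu0 :: "'w::finite pmf" and \<sigma> :: "'w \<Rightarrow> 'm::finite pmf" and \<rho> :: "'m \<Rightarrow> 'a::finite pmf"
  assumes rbr: "R_BR mu0 uR \<sigma> \<rho>" and a: "a \<in> set_pmf (\<rho> m)"
  shows "Vf uR (Pm mu0 \<sigma> m) b \<le> Vf uR (Pm mu0 \<sigma> m) a"
proof (rule ccontr)
  assume "\<not> ?thesis"
  then have ab: "Vf uR (Pm mu0 \<sigma> m) a < Vf uR (Pm mu0 \<sigma> m) b" by simp
  define w where "w = Vf uR (Pm mu0 \<sigma> m)"
  obtain c where c: "\<forall>b. w b \<le> w c" using fin_argmax[of "UNIV :: 'a set" w] by auto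
  define \<rho>' where "\<rho>' = \<rho>(m := return_pmf c)"
  define T where "T r mm = (\<Sum>a\<in>UNIV. pmf (r mm) a * Vf uR (Pm mu0 \<sigma> mm) a)" for r mm
  have split: "U mu0 uR \<sigma> r = T r m + (\<Sum>mm\<in>UNIV-{m}. T r mm)" for r
    unfolding U_alt T_def by (rule sum.remove) auto
  have "T \<rho> m < (\<Sum>a\<in>UNIV. pmf (\<rho> m) a * w c)"
    unfolding T_def w_def[symmetric]
  proof (rule sum_strict_mono_ex1)
    show "\<forall>x\<in>UNIV. pmf (\<rho> m) x * w x \<le> pmf (\<rho> m) x * w c"
      using c by (simp add: mult_left_mono)
    have "0 < pmf (\<rho> m) a" using a by (simp add: pmf_positive)
    moreover have "w a < w c" using ab c unfolding w_def by (meson less_le_trans)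
    ultimately show "\<exists>x\<in>UNIV. pmf (\<rho> m) x * w x < pmf (\<rho> m) x * w c"
      by (intro bexI[of _ a]) auto
  qed simp
  also have "\<dots> = w c" by (simp add: sum_distrib_right[symmetric] sum_pmf_eq_1)
  also have "\<dots> = T \<rho>' m" unfolding T_def \<rho>'_def w_def by (simp add: indicator_def)
  finally have "U mu0 uR \<sigma> \<rho> < U mu0 uR \<sigma> \<rho>'"
    unfolding split by (simp add: T_def \<rho>'_def)
  then show False using rbr unfolding R_BR_def by (meson not_le)
qed


lemma construct:
  fixes mu0 :: "'w::finite pmf" and \<sigma> :: "'w \<Rightarrow> 'm::finite pmf" and \<rho> :: "'m \<Rightarrow> 'a::finite pmf"
    and uS uR :: "'a \<Rightarrow> 'w \<Rightarrow> real"
  assumes card: "CARD('a) < CARD('m)"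
    and rbr: "R_BR mu0 uR \<sigma> \<rho>"
    and p1: "\<forall>\<omega>. 0 \<le> p1 \<omega>" and p2: "\<forall>\<omega>. 0 \<le> p2 \<omega>"
    and psum: "\<forall>\<omega>. p1 \<omega> + p2 \<omega> = Pm mu0 \<sigma> m0 \<omega>"
    and x: "\<forall>b. Vf uR p1 b \<le> Vf uR p1 x" and y: "\<forall>b. Vf uR p2 b \<le> Vf uR p2 y"
  shows "\<exists>(\<sigma>' :: 'w \<Rightarrow> 'm pmf) (\<rho>' :: 'm \<Rightarrow> 'a pmf). R_BR mu0 uR \<sigma>' \<rho>' \<and>
     (\<Sum>m\<in>UNIV-{m0}. \<Sum>a\<in>UNIV. pmf (\<rho> m) a * Vf uS (Pm mu0 \<sigma> m) a) + Vf uS p1 x + Vf uS p2 y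
       \<le> U mu0 uS \<sigma>' \<rho>'"
proof -
  have "CARD('a option) = Suc CARD('a)"
    by (simp add: UNIV_option_conv card_image)
  then have "card (UNIV :: 'a option set) \<le> card (UNIV :: 'm set)" using card by simp
  then obtain f :: "'a option \<Rightarrow> 'm" where f: "inj f"
    using card_le_inj[of "UNIV :: 'a option set" "UNIV :: 'm set"] by auto
  have "\<forall>m. \<exists>c. c \<in> set_pmf (\<rho> m) \<and> (\<forall>a\<in>set_pmf (\<rho> m). Vf uS (Pm mu0 \<sigma> m) a \<le> Vf uS (Pm mu0 \<sigma> m) c)"
  proof
    fix m show "\<exists>c. c \<in> set_pmf (\<rho> m) \<and> (\<forall>a\<in>set_pmf (\<rho> m). Vf uS (Pm mu0 \<sigma> m) a \<le> Vf uS (Pm mu0 \<sigma> m) c)"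
      using fin_argmax[of "set_pmf (\<rho> m)" "Vf uS (Pm mu0 \<sigma> m)"] set_pmf_not_empty by auto
  qed
  then obtain best where best: "\<And>m. best m \<in> set_pmf (\<rho> m)"
     "\<And>m a. a \<in> set_pmf (\<rho> m) \<Longrightarrow> Vf uS (Pm mu0 \<sigma> m) a \<le> Vf uS (Pm mu0 \<sigma> m) (best m)"
    by metis
  define q where "q \<omega> = p1 \<omega> / Pm mu0 \<sigma> m0 \<omega>" for \<omega>
  define K where "K \<omega> m' = (if m' = m0 then bind_pmf (bernoulli_pmf (q \<omega>))
      (\<lambda>b. return_pmf (if b then f None else f (Some y))) else return_pmf (f (Some (best m'))))" for \<omega> m'
  define \<sigma>' where "\<sigma>' \<omega> = bind_pmf (\<sigma> \<omega>) (K \<omega>)" for \<omega>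
  define act where "act z = (case inv f z of None \<Rightarrow> x | Some a \<Rightarrow> a)" for z
  define \<rho>' where "\<rho>' z = return_pmf (act z)" for z
  have q01: "0 \<le> q \<omega>" "q \<omega> \<le> 1" for \<omega>
  proof -
    have a: "0 \<le> p1 \<omega>" "0 \<le> p2 \<omega>" "p1 \<omega> + p2 \<omega> = Pm mu0 \<sigma> m0 \<omega>"
      using p1 p2 psum by auto
    then show "0 \<le> q \<omega>" unfolding q_def by simp
    show "q \<omega> \<le> 1" unfolding q_def using a
      by (cases "Pm mu0 \<sigma> m0 \<omega> = 0") (auto simp: divide_le_eq_1)
  qed
  have pq1: "Pm mu0 \<sigma> m0 \<omega> * q \<omega> = p1 \<omega>" for \<omega>
    using p1[rule_format, of \<omega>] p2[rule_format, of \<omega>] psum[rule_format, of \<omega>] unfolding q_def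
    by (cases "Pm mu0 \<sigma> m0 \<omega> = 0") auto
  have pq2: "Pm mu0 \<sigma> m0 \<omega> * (1 - q \<omega>) = p2 \<omega>" for \<omega>
    using pq1[of \<omega>] psum[rule_format, of \<omega>] by (simp add: algebra_simps)
  have Ksum: "(\<Sum>z\<in>UNIV. pmf (K \<omega> m') z * h z) =
     (if m' = m0 then q \<omega> * h (f None) + (1 - q \<omega>) * h (f (Some y)) else h (f (Some (best m'))))"
    for \<omega> m' h
  proof (cases "m' = m0")
    case True
    have "(\<Sum>z\<in>UNIV. pmf (K \<omega> m') z * h z) = (\<Sum>b\<in>UNIV. pmf (bernoulli_pmf (q \<omega>)) b *
       (\<Sum>z\<in>UNIV. pmf (return_pmf (if b then f None else f (Some y))) z * h z))"
      unfolding K_def using True by (simp add: sum_bind)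
    also have "\<dots> = q \<omega> * h (f None) + (1 - q \<omega>) * h (f (Some y))"
      using q01[of \<omega>] by (simp add: UNIV_bool indicator_def)
    finally show ?thesis using True by simp
  next
    case False
    then show ?thesis unfolding K_def by (simp add: indicator_def)
  qed
  have key: "(\<Sum>\<omega>\<in>UNIV. pmf mu0 \<omega> * (\<Sum>z\<in>UNIV. pmf (\<sigma>' \<omega>) z * h z \<omega>)) =
     (\<Sum>m\<in>UNIV-{m0}. \<Sum>\<omega>\<in>UNIV. Pm mu0 \<sigma> m \<omega> * h (f (Some (best m))) \<omega>)
     + (\<Sum>\<omega>\<in>UNIV. p1 \<omega> * h (f None) \<omega>) + (\<Sum>\<omega>\<in>UNIV. p2 \<omega> * h (f (Some y)) \<omega>)" for h
  proof -
    have inner: "pmf mu0 \<omega> * (\<Sum>z\<in>UNIV. pmf (\<sigma>' \<omega>) z * h z \<omega>) =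
       (\<Sum>m\<in>UNIV-{m0}. Pm mu0 \<sigma> m \<omega> * h (f (Some (best m))) \<omega>)
       + p1 \<omega> * h (f None) \<omega> + p2 \<omega> * h (f (Some y)) \<omega>" for \<omega>
    proof -
      have "pmf mu0 \<omega> * (\<Sum>z\<in>UNIV. pmf (\<sigma>' \<omega>) z * h z \<omega>) =
         (\<Sum>m\<in>UNIV. Pm mu0 \<sigma> m \<omega> * (\<Sum>z\<in>UNIV. pmf (K \<omega> m) z * h z \<omega>))"
        unfolding \<sigma>'_def sum_bind by (simp add: sum_distrib_left Pm_def mult_ac)
      also have "\<dots> = Pm mu0 \<sigma> m0 \<omega> * (\<Sum>z\<in>UNIV. pmf (K \<omega> m0) z * h z \<omega>) +
          (\<Sum>m\<in>UNIV-{m0}. Pm mu0 \<sigma> m \<omega> * (\<Sum>z\<in>UNIV. pmf (K \<omega> m) z * h z \<omega>))"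
        by (rule sum.remove) auto
      also have "\<dots> = Pm mu0 \<sigma> m0 \<omega> * (q \<omega> * h (f None) \<omega> + (1 - q \<omega>) * h (f (Some y)) \<omega>) +
          (\<Sum>m\<in>UNIV-{m0}. Pm mu0 \<sigma> m \<omega> * h (f (Some (best m))) \<omega>)"
        by (simp add: Ksum)
      also have "\<dots> = (\<Sum>m\<in>UNIV-{m0}. Pm mu0 \<sigma> m \<omega> * h (f (Some (best m))) \<omega>)
         + p1 \<omega> * h (f None) \<omega> + p2 \<omega> * h (f (Some y)) \<omega>"
      proof -
        have "Pm mu0 \<sigma> m0 \<omega> * (q \<omega> * h (f None) \<omega> + (1 - q \<omega>) * h (f (Some y)) \<omega>) =
           (Pm mu0 \<sigma> m0 \<omega> * q \<omega>) * h (f None) \<omega> + (Pm mu0 \<sigma> m0 \<omega> * (1 - q \<omega>)) * h (f (Some y)) \<omega>"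
          by (simp add: algebra_simps)
        then show ?thesis unfolding pq1 pq2 by simp
      qed
      finally show ?thesis .
    qed
    show ?thesis
      unfolding inner sum.distrib by (subst sum.swap) simp
  qed
  have Uform: "U mu0 u \<sigma>' r = (\<Sum>m\<in>UNIV-{m0}. \<Sum>a\<in>UNIV. pmf (r (f (Some (best m)))) a * Vf u (Pm mu0 \<sigma> m) a)
     + (\<Sum>a\<in>UNIV. pmf (r (f None)) a * Vf u p1 a) + (\<Sum>a\<in>UNIV. pmf (r (f (Some y))) a * Vf u p2 a)"
    for u r
  proof -
    have e1: "U mu0 u \<sigma>' r = (\<Sum>\<omega>\<in>UNIV. pmf mu0 \<omega> * (\<Sum>z\<in>UNIV. pmf (\<sigma>' \<omega>) z *
        (\<lambda>z \<omega>. \<Sum>a\<in>UNIV. pmf (r z) a * u a \<omega>) z \<omega>))"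
      unfolding U_def by (simp add: sum_distrib_left mult_ac)
    have e2: "(\<Sum>\<omega>\<in>UNIV. P \<omega> * (\<Sum>a\<in>UNIV. pmf (r z) a * u a \<omega>)) = (\<Sum>a\<in>UNIV. pmf (r z) a * Vf u P a)"
      for P z
      unfolding Vf_def sum_distrib_left by (subst sum.swap) (simp add: mult_ac)
    show ?thesis unfolding e1 key e2 ..
  qed
  have pure: "(\<Sum>a\<in>UNIV. pmf (\<rho>' z) a * w a) = w (act z)" for z and w :: "'a \<Rightarrow> real"
    unfolding \<rho>'_def by (simp add: indicator_def)
  have actS: "act (f (Some a)) = a" for a unfolding act_def using f by (simp add: inv_f_f)
  have actN: "act (f None) = x" unfolding act_def using f by (simp add: inv_f_f)
  have UR': "U mu0 u \<sigma>' \<rho>' = (\<Sum>m\<in>UNIV-{m0}. Vf u (Pm mu0 \<sigma> m) (best m)) + Vf u p1 x + Vf u p2 y" for u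
    unfolding Uform pure actS actN ..
  have "R_BR mu0 uR \<sigma>' \<rho>'"
    unfolding R_BR_def
  proof
    fix r
    have "U mu0 uR \<sigma>' r \<le> (\<Sum>m\<in>UNIV-{m0}. Vf uR (Pm mu0 \<sigma> m) (best m)) + Vf uR p1 x + Vf uR p2 y"
      unfolding Uform
    proof (intro add_mono sum_mono)
      fix m
      show "(\<Sum>a\<in>UNIV. pmf (r (f (Some (best m)))) a * Vf uR (Pm mu0 \<sigma> m) a) \<le> Vf uR (Pm mu0 \<sigma> m) (best m)"
        by (rule avg_le) (use RBR_supp[OF rbr best(1)] in blast)
    next
      show "(\<Sum>a\<in>UNIV. pmf (r (f None)) a * Vf uR p1 a) \<le> Vf uR p1 x"
        by (rule avg_le) (simp add: x)
    next
      show "(\<Sum>a\<in>UNIV. pmf (r (f (Some y))) a * Vf uR p2 a) \<le> Vf uR p2 y"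
        by (rule avg_le) (simp add: y)
    qed
    then show "U mu0 uR \<sigma>' r \<le> U mu0 uR \<sigma>' \<rho>'" unfolding UR' .
  qed
  moreover have "(\<Sum>m\<in>UNIV-{m0}. \<Sum>a\<in>UNIV. pmf (\<rho> m) a * Vf uS (Pm mu0 \<sigma> m) a) + Vf uS p1 x + Vf uS p2 y
       \<le> U mu0 uS \<sigma>' \<rho>'"
    unfolding UR'
  proof (intro add_mono sum_mono order_refl)
    fix m show "(\<Sum>a\<in>UNIV. pmf (\<rho> m) a * Vf uS (Pm mu0 \<sigma> m) a) \<le> Vf uS (Pm mu0 \<sigma> m) (best m)"
      by (rule avg_le) (simp add: best(2))
  qed
  ultimately show ?thesis by blast
qed


lemma Vf_lin: "Vf u (\<lambda>\<omega>. \<alpha> * p \<omega> + \<beta> * e \<omega>) a = \<alpha> * Vf u p a + \<beta> * Vf u e a"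
  unfolding Vf_def by (simp add: algebra_simps sum.distrib sum_distrib_left)

lemma ev_lin:
  fixes A c :: real
  assumes "0 < A"
  shows "eventually (\<lambda>t. 0 \<le> A + t * c) (at_right 0)"
proof -
  have "((\<lambda>t. A + t * c) \<longlongrightarrow> A + 0 * c) (at_right 0)"
    by (intro tendsto_intros)
  then have "eventually (\<lambda>t. 0 < A + t * c) (at_right 0)"
    using order_tendstoD(1) assms by fastforce
  then show ?thesis by (rule eventually_mono) simp
qed

lemma U_le_1:
  fixes mu0 :: "'w::finite pmf" and \<sigma> :: "'w \<Rightarrow> 'm::finite pmf" and \<rho> :: "'m \<Rightarrow> 'a::finite pmf"
  assumes "\<forall>a \<omega>. 0 \<le> u a \<omega> \<and> u a \<omega> \<le> 1"
  shows "U mu0 u \<sigma> \<rho> \<le> 1"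
proof -
  have "U mu0 u \<sigma> \<rho> \<le> (\<Sum>\<omega>\<in>UNIV. \<Sum>m\<in>UNIV. \<Sum>a\<in>UNIV. pmf mu0 \<omega> * pmf (\<sigma> \<omega>) m * pmf (\<rho> m) a)"
    unfolding U_def using assms by (intro sum_mono) (simp add: mult_right_le_one_le)
  also have "\<dots> = 1" by (simp add: sum_distrib_left[symmetric] sum_pmf_eq_1)
  finally show ?thesis .
qed

theorem lemma4:
  fixes mu0 :: "'w::finite pmf"
    and uS uR :: "'a::finite \<Rightarrow> 'w \<Rightarrow> real"
    and \<sigma> :: "'w \<Rightarrow> 'm::finite pmf"
    and \<rho> :: "'m \<Rightarrow> 'a pmf"
  assumes prior_pos: "\<forall>\<omega>. pmf mu0 \<omega> > 0"
    and card_M: "CARD('m) > CARD('w)" "CARD('m) > CARD('a)"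
    and uS_range: "\<forall>a \<omega>. 0 \<le> uS a \<omega> \<and> uS a \<omega> \<le> 1"
    and uR_range: "\<forall>a \<omega>. 0 \<le> uR a \<omega> \<and> uR a \<omega> \<le> 1"
    and scant: "scant_indifferences uS uR"
    and rbr: "R_BR mu0 uR \<sigma> \<rho>"
    and opt: "U mu0 uS \<sigma> \<rho> = persuasion_payoff mu0 uS uR TYPE('m)"
  shows "\<forall>m \<in> M_sigma \<sigma>. \<exists>a. \<rho> m = return_pmf a"
proof (rule ballI, rule ccontr)
  fix m0 assume m0: "m0 \<in> M_sigma \<sigma>" and nret: "\<not> (\<exists>a. \<rho> m0 = return_pmf a)"
  define p where "p = Pm mu0 \<sigma> m0"
  define T where "T m = (\<Sum>a\<in>UNIV. pmf (\<rho> m) a * Vf uS (Pm mu0 \<sigma> m) a)" for m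
  define R where "R = (\<Sum>m\<in>UNIV-{m0}. T m)"
  have Ueq: "U mu0 uS \<sigma> \<rho> = T m0 + R"
    unfolding U_alt R_def T_def by (rule sum.remove) auto
  have pnn: "\<forall>\<omega>. 0 \<le> p \<omega>" unfolding p_def Pm_def by simp
  have pnz: "\<exists>\<omega>. p \<omega> \<noteq> 0"
  proof -
    obtain \<omega> where "pmf (\<sigma> \<omega>) m0 > 0" using m0 unfolding M_sigma_def by auto
    then show ?thesis using prior_pos[rule_format, of \<omega>] unfolding p_def Pm_def by (intro exI[of _ \<omega>]) simp
  qed
  have noimp: "U mu0 uS \<sigma>' \<rho>' \<le> U mu0 uS \<sigma> \<rho>" if "R_BR mu0 uR \<sigma>' \<rho>'"
    for \<sigma>' :: "'w \<Rightarrow> 'm pmf" and \<rho>' :: "'m \<Rightarrow> 'a pmf"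
  proof -
    have bdd: "bdd_above {U mu0 uS \<sigma> \<rho> |(\<sigma> :: 'w \<Rightarrow> 'm pmf) \<rho>. R_BR mu0 uR \<sigma> \<rho>}"
      using U_le_1[OF uS_range] by (auto intro!: bdd_aboveI[of _ 1])
    have "U mu0 uS \<sigma>' \<rho>' \<le> Sup {U mu0 uS \<sigma> \<rho> |(\<sigma> :: 'w \<Rightarrow> 'm pmf) \<rho>. R_BR mu0 uR \<sigma> \<rho>}"
      by (rule cSup_upper[OF _ bdd]) (use that in blast)
    then show ?thesis using opt unfolding persuasion_payoff_def by simp
  qed
  obtain b0 where b0: "b0 \<in> set_pmf (\<rho> m0)" "\<forall>a\<in>set_pmf (\<rho> m0). Vf uS p a \<le> Vf uS p b0"
    using fin_argmax[of "set_pmf (\<rho> m0)" "Vf uS p"] set_pmf_not_empty by auto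
  have b0R: "\<forall>b. Vf uR p b \<le> Vf uR p b0" using RBR_supp[OF rbr b0(1)] unfolding p_def by blast
  have V0: "Vf u (\<lambda>_. 0) a = 0" for u a unfolding Vf_def by simp
  show False
  proof (cases "\<exists>a\<in>set_pmf (\<rho> m0). Vf uS p a < Vf uS p b0")
    case True
    then obtain a where a: "a \<in> set_pmf (\<rho> m0)" "Vf uS p a < Vf uS p b0" by auto
    have "T m0 < (\<Sum>a\<in>UNIV. pmf (\<rho> m0) a * Vf uS p b0)"
      unfolding T_def p_def[symmetric]
    proof (rule sum_strict_mono_ex1)
      show "\<forall>x\<in>UNIV. pmf (\<rho> m0) x * Vf uS p x \<le> pmf (\<rho> m0) x * Vf uS p b0"
        using b0(2) by (metis UNIV_I mult_left_mono mult_not_zero order_refl pmf_nonneg set_pmf_iff)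
      have "0 < pmf (\<rho> m0) a" using a by (simp add: pmf_positive)
      then show "\<exists>x\<in>UNIV. pmf (\<rho> m0) x * Vf uS p x < pmf (\<rho> m0) x * Vf uS p b0"
        using a by (intro bexI[of _ a]) auto
    qed simp
    also have "\<dots> = Vf uS p b0" by (simp add: sum_distrib_right[symmetric] sum_pmf_eq_1)
    finally have lt: "T m0 < Vf uS p b0" .
    obtain \<sigma>' :: "'w \<Rightarrow> 'm pmf" and \<rho>' :: "'m \<Rightarrow> 'a pmf" where c: "R_BR mu0 uR \<sigma>' \<rho>'"
      "R + Vf uS p b0 \<le> U mu0 uS \<sigma>' \<rho>'"
      using construct[OF card_M(2) rbr, of p "\<lambda>_. 0" m0 b0 b0 uS] pnn b0R
      unfolding p_def R_def T_def by (auto simp: V0)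
    then show False using noimp[OF c(1)] lt Ueq by simp
  next
    case False
    then have eqS: "\<forall>a\<in>set_pmf (\<rho> m0). Vf uS p a = Vf uS p b0" using b0 by force
    have "T m0 = (\<Sum>a\<in>UNIV. pmf (\<rho> m0) a * Vf uS p b0)"
      unfolding T_def p_def[symmetric]
      by (rule sum.cong[OF refl]) (metis eqS mult_not_zero set_pmf_iff)
    also have "\<dots> = Vf uS p b0" by (simp add: sum_distrib_right[symmetric] sum_pmf_eq_1)
    finally have Tm0: "T m0 = Vf uS p b0" .
    obtain i j where ij: "i \<in> set_pmf (\<rho> m0)" "j \<in> set_pmf (\<rho> m0)" "i \<noteq> j"
    proof -
      have "\<not> set_pmf (\<rho> m0) \<subseteq> {b0}" using nret set_pmf_subset_singleton by metis
      then obtain j where "j \<in> set_pmf (\<rho> m0)" "j \<noteq> b0" by auto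
      then show ?thesis using that b0(1) by blast
    qed
    have iR: "\<forall>b. Vf uR p b \<le> Vf uR p i" using RBR_supp[OF rbr ij(1)] unfolding p_def by blast
    have jR: "\<forall>b. Vf uR p b \<le> Vf uR p j" using RBR_supp[OF rbr ij(2)] unfolding p_def by blast
    have iS: "Vf uS p i = Vf uS p b0" and jS: "Vf uS p j = Vf uS p b0" using eqS ij by auto
    obtain d where d1: "\<forall>\<omega>. p \<omega> = 0 \<longrightarrow> d \<omega> = 0"
      and d2: "\<forall>k. (\<forall>b. Vf uR p b \<le> Vf uR p k) \<longrightarrow> Vf uR d k = Vf uR d i"
      and d3: "Vf uS d j \<noteq> Vf uS d i"
      using find_d[OF scant pnz ij(3) iR jR] by blast
    define \<delta> where "\<delta> = Vf uS d j - Vf uS d i"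
    define e where "e \<omega> = \<delta> * d \<omega>" for \<omega>
    have Ve: "Vf u e a = \<delta> * Vf u d a" for u a
      using Vf_lin[of u 0 p \<delta> d a] unfolding e_def by simp
    have e1: "p \<omega> = 0 \<Longrightarrow> e \<omega> = 0" for \<omega> using d1 unfolding e_def by simp
    have e2: "(\<forall>b. Vf uR p b \<le> Vf uR p k) \<Longrightarrow> Vf uR e k = Vf uR e i" for k using d2 unfolding Ve by metis
    have e3: "Vf uS e j - Vf uS e i = \<delta> * \<delta>" unfolding Ve \<delta>_def by (simp add: algebra_simps)
    have \<delta>pos: "0 < \<delta> * \<delta>" using d3 unfolding \<delta>_def by (auto simp: zero_less_mult_iff)
    define q1 where "q1 t = (\<lambda>\<omega>. (1/2) * p \<omega> + t * e \<omega>)" for t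
    define q2 where "q2 t = (\<lambda>\<omega>. (1/2) * p \<omega> + (- t) * e \<omega>)" for t
    have ejR: "Vf uR e j = Vf uR e i" using e2 jR by blast
    have ev1: "eventually (\<lambda>t. \<forall>\<omega>. 0 \<le> q1 t \<omega>) (at_right 0)"
    proof (rule eventually_all_finite)
      fix \<omega>
      show "eventually (\<lambda>t. 0 \<le> q1 t \<omega>) (at_right 0)"
      proof (cases "p \<omega> = 0")
        case True then show ?thesis using e1 by (simp add: q1_def)
      next
        case False then have "0 < (1/2) * p \<omega>" using pnn by (simp add: order_less_le)
        then show ?thesis unfolding q1_def by (rule ev_lin)
      qed
    qed
    have ev2: "eventually (\<lambda>t. \<forall>\<omega>. 0 \<le> q2 t \<omega>) (at_right 0)"
    proof (rule eventually_all_finite)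
      fix \<omega>
      show "eventually (\<lambda>t. 0 \<le> q2 t \<omega>) (at_right 0)"
      proof (cases "p \<omega> = 0")
        case True then show ?thesis using e1 by (simp add: q2_def)
      next
        case False then have "0 < (1/2) * p \<omega>" using pnn by (simp add: order_less_le)
        then have "eventually (\<lambda>t. 0 \<le> (1/2) * p \<omega> + t * (- e \<omega>)) (at_right 0)" by (rule ev_lin)
        then show ?thesis unfolding q2_def by simp
      qed
    qed
    have ev3: "eventually (\<lambda>t. \<forall>b. Vf uR (q1 t) b \<le> Vf uR (q1 t) j) (at_right 0)"
    proof (rule eventually_all_finite)
      fix b
      have eq: "Vf uR (q1 t) j - Vf uR (q1 t) b = (1/2) * (Vf uR p j - Vf uR p b) + t * (Vf uR e j - Vf uR e b)" for t
        unfolding q1_def Vf_lin by (simp add: algebra_simps)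
      show "eventually (\<lambda>t. Vf uR (q1 t) b \<le> Vf uR (q1 t) j) (at_right 0)"
      proof (cases "Vf uR p b < Vf uR p j")
        case True
        then have "eventually (\<lambda>t. 0 \<le> (1/2) * (Vf uR p j - Vf uR p b) + t * (Vf uR e j - Vf uR e b)) (at_right 0)"
          by (intro ev_lin) simp
        then show ?thesis by (rule eventually_mono) (use eq in smt)
      next
        case False
        then have "Vf uR p b = Vf uR p j" using jR by (meson order_antisym not_le)
        then have "\<forall>b'. Vf uR p b' \<le> Vf uR p b" using jR by simp
        then have "Vf uR e b = Vf uR e j" using e2 ejR by simp
        then show ?thesis using eq \<open>Vf uR p b = Vf uR p j\<close> by (simp add: eq[symmetric])
      qed
    qed
    have ev4: "eventually (\<lambda>t. \<forall>b. Vf uR (q2 t) b \<le> Vf uR (q2 t) i) (at_right 0)"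
    proof (rule eventually_all_finite)
      fix b
      have eq: "Vf uR (q2 t) i - Vf uR (q2 t) b = (1/2) * (Vf uR p i - Vf uR p b) + t * (Vf uR e b - Vf uR e i)" for t
        unfolding q2_def Vf_lin by (simp add: algebra_simps)
      show "eventually (\<lambda>t. Vf uR (q2 t) b \<le> Vf uR (q2 t) i) (at_right 0)"
      proof (cases "Vf uR p b < Vf uR p i")
        case True
        then have "eventually (\<lambda>t. 0 \<le> (1/2) * (Vf uR p i - Vf uR p b) + t * (Vf uR e b - Vf uR e i)) (at_right 0)"
          by (intro ev_lin) simp
        then show ?thesis by (rule eventually_mono) (use eq in smt)
      next
        case False
        then have "Vf uR p b = Vf uR p i" using iR by (meson order_antisym not_le)
        then have "\<forall>b'. Vf uR p b' \<le> Vf uR p b" using iR by simp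
        then have "Vf uR e b = Vf uR e i" using e2 by simp
        then show ?thesis using eq \<open>Vf uR p b = Vf uR p i\<close> by (simp add: eq[symmetric])
      qed
    qed
    have "eventually (\<lambda>t. (\<forall>\<omega>. 0 \<le> q1 t \<omega>) \<and> (\<forall>\<omega>. 0 \<le> q2 t \<omega>) \<and>
        (\<forall>b. Vf uR (q1 t) b \<le> Vf uR (q1 t) j) \<and> (\<forall>b. Vf uR (q2 t) b \<le> Vf uR (q2 t) i)) (at_right 0)"
      using ev1 ev2 ev3 ev4 by (intro eventually_conj)
    then obtain bnd :: real where bnd: "bnd > 0" "\<forall>t>0. t < bnd \<longrightarrow> (\<forall>\<omega>. 0 \<le> q1 t \<omega>) \<and> (\<forall>\<omega>. 0 \<le> q2 t \<omega>) \<and>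
        (\<forall>b. Vf uR (q1 t) b \<le> Vf uR (q1 t) j) \<and> (\<forall>b. Vf uR (q2 t) b \<le> Vf uR (q2 t) i)"
      unfolding eventually_at_right_field by auto
    define t where "t = bnd / 2"
    have t: "t > 0" "t < bnd" using bnd(1) unfolding t_def by auto
    note tt = bnd(2)[rule_format, OF t]
    have qs: "\<forall>\<omega>. q1 t \<omega> + q2 t \<omega> = Pm mu0 \<sigma> m0 \<omega>"
      unfolding q1_def q2_def p_def by (simp add: algebra_simps)
    obtain \<sigma>' :: "'w \<Rightarrow> 'm pmf" and \<rho>' :: "'m \<Rightarrow> 'a pmf" where c: "R_BR mu0 uR \<sigma>' \<rho>'"
      "R + Vf uS (q1 t) j + Vf uS (q2 t) i \<le> U mu0 uS \<sigma>' \<rho>'"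
      using construct[OF card_M(2) rbr, of "q1 t" "q2 t" m0 j i uS] tt qs
      unfolding R_def T_def by blast
    have "Vf uS (q1 t) j + Vf uS (q2 t) i = (1/2) * (Vf uS p j + Vf uS p i) + t * (Vf uS e j - Vf uS e i)"
      unfolding q1_def q2_def Vf_lin by (simp add: algebra_simps)
    also have "\<dots> = Vf uS p b0 + t * (\<delta> * \<delta>)" unfolding e3 iS jS by simp
    finally have "Vf uS (q1 t) j + Vf uS (q2 t) i > T m0"
      using Tm0 t(1) \<delta>pos by simp
    then show False using noimp[OF c(1)] c(2) Ueq by simp
  qed
qed

end
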